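(* Let $H(s)=K\,\frac{\prod_{i=1}^{m}(s-z_i)}{\prod_{i=1}^{n}(s-p_i)}$ be a rational function with real coefficients, $K>0$, $m\leq n$, zeros $z\in\mathbb{C}^m$ and poles $p\in\mathbb{C}^n$, where $p_1,\dots,p_{n_r}$ are real and $p_{n_r+1},\dots,p_n$ are non-real (occurring in complex-conjugate pairs). For $\mu\in\mathbb{N}=\{1,2,\dots\}$ and $\delta>-\min_{i,j}\{\operatorname{Re}(p_i),\operatorname{Re}(z_j)\}$ define $\theta_i=\angle(p_i+\delta)$ ($1\le i\le n$), $\phi_j=\angle(z_j+\delta)$ ($1\le j\le m$), and $w,v\in\mathbb{R}^{n+m}$ by $w_i=(p_i+\delta)^\mu$ for $1\le i\le n_r$, $w_i=0$ for $n_r+1\le i\le n+m$; $v_i=0$ for $1\le i\le n_r$, $v_i=|p_i+\delta|^\mu$ for $n_r+1\le i\le n$, $v_i=|z_{i-n}+\delta|^\mu$ for $n+1\le i\le n+m$. If for some such $\mu$ and $\delta$ we have $w\succ_w v$ and $$\sum_{i=1}^n w_i^{k/\mu}+\sum_{i=1}^n v_i^{k/\mu}\cos(\theta_i k)\;\geq\;\sum_{i=n+1}^{n+m} v_i^{k/\mu}\cos(\phi_{i-n}k)\quad\text{for all }k\in\{1,\dots,\mu-1\},$$ then $H$ is logarithmically completely monotonic.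
   Context: $\angle(\cdot)$ denotes the argument (angle) of a complex number. For $x\in\mathbb{R}^N$, $x^{\downarrow}$ is the vector of its components sorted in descending order; $x\succ_w y$ means $\sum_{i=1}^k x^{\downarrow}_i\geq\sum_{i=1}^k y^{\downarrow}_i$ for all $k=1,\dots,N$. $H$ is logarithmically completely monotonic (LCM) if $H(s)>0$ and $(-1)^k[\log H(s)]^{(k)}\geq 0$ for all $k\in\{1,2,\dots\}$ and all $s\in(\sigma(H),+\infty)$, where $\sigma(H)=\max_i\operatorname{Re}(p_i)$. *)

theory Defs
  imports "HOL-Analysis.Analysis" "HOL-Computational_Algebra.Polynomial"
begin

definition ratfun :: "real \<Rightarrow> complex list \<Rightarrow> complex list \<Rightarrow> complex \<Rightarrow> complex" where
  "ratfun K z p s = complex_of_real K * prod_list (map (\<lambda>zi. s - zi) z) / prod_list (map (\<lambda>pi. s - pi) p)"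

definition root_poly :: "complex list \<Rightarrow> complex poly" where
  "root_poly xs = prod_list (map (\<lambda>x. [:- x, 1:]) xs)"

definition weakly_majorizes :: "real list \<Rightarrow> real list \<Rightarrow> bool" where
  "weakly_majorizes x y \<longleftrightarrow> length x = length y \<and>
     (\<forall>k\<in>{1..length x}. sum_list (take k (rev (sort y))) \<le> sum_list (take k (rev (sort x))))"

text \<open>Logarithmic complete monotonicity of H on (sigma(H), +infinity), sigma(H) = max Re p_i
  (the whole real line when there are no poles).\<close>
definition log_compl_mono :: "(complex \<Rightarrow> complex) \<Rightarrow> complex list \<Rightarrow> bool" where
  "log_compl_mono H p \<longleftrightarrow>
     (\<forall>s::real. (\<forall>q\<in>set p. Re q < s) \<longrightarrow> H (of_real s) \<in> \<real> \<and> Re (H (of_real s)) > 0) \<and>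
     (\<forall>k::nat. k \<ge> 1 \<longrightarrow> (\<forall>s::real. (\<forall>q\<in>set p. Re q < s) \<longrightarrow>
        (-1) ^ k * (deriv ^^ k) (\<lambda>x. ln (Re (H (of_real x)))) s \<ge> 0))"

text \<open>The vectors w, v in R^(n+m) (0-based indices; nr = number of real poles).\<close>
definition wvec :: "nat \<Rightarrow> complex list \<Rightarrow> complex list \<Rightarrow> nat \<Rightarrow> real \<Rightarrow> real list" where
  "wvec nr p z \<mu> \<delta> = map (\<lambda>i. if i < nr then Re ((p ! i + of_real \<delta>) ^ \<mu>) else 0)
                          [0..<length p + length z]"

definition vvec :: "nat \<Rightarrow> complex list \<Rightarrow> complex list \<Rightarrow> nat \<Rightarrow> real \<Rightarrow> real list" where
  "vvec nr p z \<mu> \<delta> = map (\<lambda>i. if i < nr then 0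
                               else if i < length p then cmod (p ! i + of_real \<delta>) ^ \<mu>
                               else cmod (z ! (i - length p) + of_real \<delta>) ^ \<mu>)
                          [0..<length p + length z]"

end

theory Submission
  imports Defs
begin

lemma tangent_powr:
  fixes a b q :: real
  assumes "0 \<le> a" "0 \<le> b" "1 \<le> q"
  shows "b powr q + q * b powr (q - 1) * (a - b) \<le> a powr q"
proof (cases "b = 0")
  case True
  then show ?thesis using assms by (cases "q = 1") auto
next
  case b: False
  show ?thesis
  proof (cases "a = 0")
    case True
    have "b powr q = b powr (q - 1) * b" using b assms
      by (simp add: powr_diff)
    then have "b powr q + q * b powr (q - 1) * (a - b) = (1 - q) * b powr q"
      using True by (simp add: algebra_simps)
    also have "\<dots> \<le> 0" using assms by (simp add: mult_nonpos_nonneg)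
    finally show ?thesis using True by simp
  next
    case False
    have "a powr q - b powr q \<ge> q * b powr (q - 1) * (a - b)"
      using assms b False
      by (intro convex_on_imp_above_tangent[OF powr_convex[OF assms(3)]])
         (auto intro!: has_field_derivative_at_within has_real_derivative_powr
               simp: interior_open)
    then show ?thesis by simp
  qed
qed

lemma abel_nonneg:
  fixes c d :: "nat \<Rightarrow> real"
  assumes S: "\<And>k. k \<le> L \<Longrightarrow> 0 \<le> (\<Sum>i<k. d i)"
    and dec: "\<And>i. c (Suc i) \<le> c i" and nn: "\<And>i. 0 \<le> c i"
  shows "0 \<le> (\<Sum>i<L. c i * d i)"
proof -
  have "N \<le> L \<longrightarrow> c N * (\<Sum>i<N. d i) \<le> (\<Sum>i<N. c i * d i)" for N
  proof (induction N)
    case 0 then show ?case by simp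
  next
    case (Suc N)
    show ?case
    proof
      assume N: "Suc N \<le> L"
      have h: "0 \<le> (\<Sum>i<Suc N. d i)" using S N by blast
      have "c (Suc N) * (\<Sum>i<Suc N. d i) \<le> c N * (\<Sum>i<Suc N. d i)"
        using dec h by (simp add: mult_right_mono)
      also have "\<dots> = c N * (\<Sum>i<N. d i) + c N * d N" by (simp add: algebra_simps)
      also have "\<dots> \<le> (\<Sum>i<N. c i * d i) + c N * d N" using Suc N by simp
      finally show "c (Suc N) * (\<Sum>i<Suc N. d i) \<le> (\<Sum>i<Suc N. c i * d i)" by simp
    qed
  qed
  then have "c L * (\<Sum>i<L. d i) \<le> (\<Sum>i<L. c i * d i)" by blast
  moreover have "0 \<le> c L * (\<Sum>i<L. d i)" using S nn by simp
  ultimately show ?thesis by linarith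
qed

lemma sum_list_rev_sort_map: fixes f :: "real \<Rightarrow> real" and xs :: "real list" shows "sum_list (map f (rev (sort xs))) = sum_list (map f xs)"
proof -
  have "mset (map f (rev (sort xs))) = mset (map f xs)" by simp
  then have "sum_mset (mset (map f (rev (sort xs)))) = sum_mset (mset (map f xs))" by simp
  then show ?thesis by (simp only: sum_mset_sum_list)
qed
lemma rev_sort_desc:
  fixes y :: "real list"
  assumes "i \<le> j" "j < length y"
  shows "rev (sort y) ! j \<le> rev (sort y) ! i"
proof -
  have "rev (sort y) ! j = sort y ! (length y - Suc j)" using assms by (simp add: rev_nth)
  moreover have "rev (sort y) ! i = sort y ! (length y - Suc i)" using assms by (simp add: rev_nth)
  moreover have "sort y ! (length y - Suc j) \<le> sort y ! (length y - Suc i)"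
    using assms by (intro sorted_nth_mono[OF sorted_sort]) auto
  ultimately show ?thesis by simp
qed

lemma sum_list_take_nth:
  fixes xs :: "real list"
  assumes "k \<le> length xs"
  shows "sum_list (take k xs) = (\<Sum>i<k. xs ! i)"
  using assms by (simp add: sum_list_sum_nth atLeast0LessThan min_def)

lemma sum_list_map_nth: "sum_list (map f xs) = (\<Sum>i<length xs. f (xs ! i))"
proof -
  have "sum_list (map f xs) = (\<Sum>i = 0..<length (map f xs). map f xs ! i)"
    by (rule sum_list_sum_nth)
  also have "\<dots> = (\<Sum>i<length xs. f (xs ! i))"
    by (simp add: atLeast0LessThan)
  finally show ?thesis .
qed

lemma karamata_powr:
  fixes x y :: "real list" and q :: real
  assumes wm: "weakly_majorizes x y" and x0: "\<forall>a\<in>set x. 0 \<le> a" and y0: "\<forall>a\<in>set y. 0 \<le> a"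
    and q: "1 \<le> q"
  shows "sum_list (map (\<lambda>a. a powr q) y) \<le> sum_list (map (\<lambda>a. a powr q) x)"
proof -
  define X where "X = rev (sort x)"
  define Y where "Y = rev (sort y)"
  define L where "L = length x"
  have lenY: "length y = L" using wm by (simp add: weakly_majorizes_def L_def)
  have lX: "length X = L" and lY: "length Y = L" by (simp_all add: X_def Y_def L_def lenY)
  have X0: "0 \<le> X ! i" if "i < L" for i
  proof -
    have "X ! i \<in> set X" using that lX by (intro nth_mem) simp
    then show ?thesis using x0 by (simp add: X_def)
  qed
  have Y0: "0 \<le> Y ! i" if "i < L" for i
  proof -
    have "Y ! i \<in> set Y" using that lY by (intro nth_mem) simp
    then show ?thesis using y0 by (simp add: Y_def)
  qed
  define c where "c i = (if i < L then q * (Y ! i) powr (q - 1) else 0)" for i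
  define d where "d i = X ! i - Y ! i" for i
  have S: "0 \<le> (\<Sum>i<k. d i)" if "k \<le> L" for k
  proof (cases "k = 0")
    case True then show ?thesis by simp
  next
    case False
    have wm2: "\<forall>k\<in>{1..L}. sum_list (take k Y) \<le> sum_list (take k X)"
      using wm unfolding weakly_majorizes_def X_def Y_def L_def by blast
    have "k \<in> {1..L}" using False that by simp
    then have "sum_list (take k Y) \<le> sum_list (take k X)" using wm2 by blast
    then show ?thesis using that lX lY
      by (simp add: sum_list_take_nth d_def sum_subtractf)
  qed
  have dec: "c (Suc i) \<le> c i" for i
  proof (cases "Suc i < L")
    case True
    have "Y ! Suc i \<le> Y ! i" using True lY unfolding Y_def
      by (intro rev_sort_desc) (auto simp: lenY)
    then have "Y ! Suc i powr (q - 1) \<le> Y ! i powr (q - 1)"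
      using Y0 True q by (intro powr_mono2) auto
    then show ?thesis using True q by (simp add: c_def)
  next
    case False
    then show ?thesis using q Y0 by (auto simp: c_def)
  qed
  have nn: "0 \<le> c i" for i using q by (simp add: c_def)
  have A: "0 \<le> (\<Sum>i<L. c i * d i)" using abel_nonneg[of L d c] S dec nn by blast
  have B: "(Y ! i) powr q + c i * d i \<le> (X ! i) powr q" if "i < L" for i
    using tangent_powr[OF X0[OF that] Y0[OF that] q] that by (simp add: c_def d_def)
  have "(\<Sum>i<L. (Y ! i) powr q) \<le> (\<Sum>i<L. (X ! i) powr q)"
  proof -
    have "(\<Sum>i<L. (Y ! i) powr q) \<le> (\<Sum>i<L. (Y ! i) powr q + c i * d i)"
      using A by (simp add: sum.distrib)
    also have "\<dots> \<le> (\<Sum>i<L. (X ! i) powr q)" using B by (intro sum_mono) auto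
    finally show ?thesis .
  qed
  moreover have "sum_list (map (\<lambda>a. a powr q) y) = (\<Sum>i<L. (Y ! i) powr q)"
  proof -
    have "sum_list (map (\<lambda>a. a powr q) y) = sum_list (map (\<lambda>a. a powr q) Y)"
      unfolding Y_def using sum_list_rev_sort_map[of "\<lambda>a. a powr q" y] by (rule sym)
    also have "\<dots> = (\<Sum>i<length Y. (Y ! i) powr q)" by (rule sum_list_map_nth)
    finally show ?thesis unfolding lY .
  qed
  moreover have "sum_list (map (\<lambda>a. a powr q) x) = (\<Sum>i<L. (X ! i) powr q)"
  proof -
    have "sum_list (map (\<lambda>a. a powr q) x) = sum_list (map (\<lambda>a. a powr q) X)"
      unfolding X_def using sum_list_rev_sort_map[of "\<lambda>a. a powr q" x] by (rule sym)
    also have "\<dots> = (\<Sum>i<length X. (X ! i) powr q)" by (rule sum_list_map_nth)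
    finally show ?thesis unfolding lX .
  qed
  ultimately show ?thesis by linarith
qed

lemma Re_pow_Arg: "Re (a ^ n) = cmod a ^ n * cos (Arg a * real n)"
proof -
  have "a ^ n = rcis (cmod a) (Arg a) ^ n" by (simp add: rcis_cmod_Arg)
  also have "\<dots> = rcis (cmod a ^ n) (real n * Arg a)" by (rule DeMoivre2)
  finally show ?thesis by (simp add: mult.commute)
qed

lemma inv_pow_series:
  fixes a :: complex and t :: real and k :: nat
  assumes at: "cmod a < t" and k: "k \<ge> 1"
  shows "(\<lambda>n. of_nat ((k + n - 1) choose n) * a ^ n / of_real t ^ (n + k))
           sums inverse ((of_real t - a) ^ k)"
proof -
  have t0: "t > 0" using at norm_ge_zero[of a] by linarith
  define z where "z = - a / of_real t"
  have nz: "norm z < 1" using at t0 by (simp add: z_def norm_divide)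
  have S: "(\<lambda>n. (-1)^n * ((of_nat k + of_nat n - 1) gchoose n) * z^n) sums (1 + z) powr (- of_nat k)"
    by (rule one_plus_neg_powr_powser[OF nz])
  have z1: "1 + z \<noteq> 0"
  proof
    assume "1 + z = 0" then have "z = -1" by (simp add: add_eq_0_iff)
    with nz show False by simp
  qed
  have e1: "(1 + z) powr (- of_nat k) = inverse ((1 + z) ^ k)"
    using z1 by (simp add: powr_minus powr_nat')
  have e2: "(-1)^n * ((of_nat k + of_nat n - 1) gchoose n) * z^n
            = of_nat ((k + n - 1) choose n) * (a / of_real t) ^ n" for n
  proof -
    have "(of_nat k + of_nat n - 1 :: complex) = of_nat (k + n - 1)" using k by (simp add: of_nat_diff)
    then have "((of_nat k + of_nat n - 1) gchoose n :: complex) = of_nat ((k + n - 1) choose n)"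
      by (simp add: binomial_gbinomial)
    moreover have "(-1)^n * z^n = (a / of_real t) ^ n"
      by (simp add: z_def power_minus[symmetric] power_mult_distrib[symmetric])
    ultimately show ?thesis by (metis (no_types, lifting) mult.assoc mult.left_commute)
  qed
  have S2: "(\<lambda>n. of_nat ((k + n - 1) choose n) * (a / of_real t) ^ n) sums inverse ((1 + z) ^ k)"
    using S unfolding e1 e2 .
  have S3: "(\<lambda>n. inverse (of_real t ^ k) * (of_nat ((k + n - 1) choose n) * (a / of_real t) ^ n))
     sums (inverse (of_real t ^ k) * inverse ((1 + z) ^ k))"
    by (rule sums_mult[OF S2])
  have e3: "inverse (of_real t ^ k) * (of_nat ((k + n - 1) choose n) * (a / of_real t) ^ n)
            = of_nat ((k + n - 1) choose n) * a ^ n / of_real t ^ (n + k)" for n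
    using t0 by (simp add: field_simps power_add power_divide)
  have e4: "inverse (of_real t ^ k) * inverse ((1 + z) ^ k) = inverse ((of_real t - a) ^ k)"
  proof -
    have "of_real t * (1 + z) = of_real t - a" using t0 by (simp add: z_def field_simps)
    then have "(of_real t) ^ k * (1 + z) ^ k = (of_real t - a) ^ k"
      by (metis power_mult_distrib)
    then show ?thesis by (metis inverse_mult_distrib)
  qed
  show ?thesis using S3 unfolding e3 e4 .
qed

lemma RD:
  fixes F :: "complex \<Rightarrow> complex"
  assumes "(F has_field_derivative D) (at (of_real x))"
  shows "((\<lambda>x. Re (F (of_real x))) has_real_derivative Re D) (at x)"
  by (intro has_field_derivative_Re has_vector_derivative_real_field assms)

lemma poly_root_poly: "poly (root_poly cs) w = prod_list (map (\<lambda>c. w - c) cs)"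
  unfolding root_poly_def by (induction cs) (auto simp: algebra_simps)

lemma prod_factor_tendsto:
  fixes cs :: "complex list"
  shows "((\<lambda>y::real. prod_list (map (\<lambda>c. 1 - c / of_real y) cs)) \<longlongrightarrow> 1) at_top"
proof (induction cs)
  case Nil then show ?case by simp
next
  case (Cons c cs)
  have "((\<lambda>y::real. inverse y) \<longlongrightarrow> 0) at_top"
    by (intro tendsto_inverse_0_at_top filterlim_ident)
  then have "((\<lambda>y::real. c * of_real (inverse y)) \<longlongrightarrow> c * of_real 0) at_top"
    by (intro tendsto_mult tendsto_const tendsto_of_real)
  then have "((\<lambda>y::real. c / of_real y) \<longlongrightarrow> 0) at_top"
    by (simp add: divide_inverse)
  then have "((\<lambda>y::real. 1 - c / of_real y) \<longlongrightarrow> 1 - 0) at_top"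
    by (intro tendsto_intros)
  then have "((\<lambda>y::real. (1 - c / of_real y) * prod_list (map (\<lambda>c. 1 - c / of_real y) cs)) \<longlongrightarrow> (1 - 0) * 1) at_top"
    using Cons by (intro tendsto_mult)
  then show ?case by simp
qed

lemma prod_factor_eq:
  fixes y :: real and cs :: "complex list" assumes "y \<noteq> 0"
  shows "prod_list (map (\<lambda>c. of_real y - c) cs)
         = of_real (y ^ length cs) * prod_list (map (\<lambda>c. 1 - c / of_real y) cs)"
proof (induction cs)
  case Nil then show ?case by simp
next
  case (Cons a cs)
  have "of_real y - a = of_real y * (1 - a / of_real y)" using assms by (simp add: field_simps)
  then show ?case using Cons assms by (simp add: algebra_simps)
qed

lemma prod_pos:
  fixes cs :: "complex list" and x :: real
  assumes real: "\<forall>i. coeff (root_poly cs) i \<in> \<real>" and lt: "\<forall>c\<in>set cs. Re c < x"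
  shows "prod_list (map (\<lambda>c. of_real x - c) cs) \<in> \<real> \<and> Re (prod_list (map (\<lambda>c. of_real x - c) cs)) > 0"
proof -
  define P where "P y = prod_list (map (\<lambda>c. of_real y - c) cs)" for y :: real
  have PR: "P y \<in> \<real>" for y
  proof -
    have "P y = poly (root_poly cs) (of_real y)" by (simp add: P_def poly_root_poly)
    also have "\<dots> = (\<Sum>i\<le>degree (root_poly cs). coeff (root_poly cs) i * of_real y ^ i)"
      by (rule poly_altdef)
    also have "\<dots> \<in> \<real>" using real by (intro sum_in_Reals Reals_mult) auto
    finally show ?thesis .
  qed
  have PRe: "P y = of_real (Re (P y))" for y using PR[of y] by (simp add: Reals_cases)
  have P0: "P y \<noteq> 0" if "x \<le> y" for y
  proof
    assume "P y = 0"
    then obtain c where "c \<in> set cs" "of_real y - c = 0" by (auto simp: P_def prod_list_zero_iff)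
    then have "Re c = y" by auto
    with lt \<open>c \<in> set cs\<close> that show False by fastforce
  qed
  have cont: "continuous_on A (\<lambda>y. Re (P y))" for A
  proof -
    have "continuous_on A (\<lambda>y. Re (poly (root_poly cs) (of_real y)))" by (intro continuous_intros)
    then show ?thesis by (simp add: P_def poly_root_poly)
  qed
  have ev1: "eventually (\<lambda>y. Re (prod_list (map (\<lambda>c. 1 - c / of_real y) cs)) > 0) at_top"
  proof -
    have "((\<lambda>y::real. Re (prod_list (map (\<lambda>c. 1 - c / of_real y) cs))) \<longlongrightarrow> Re 1) at_top"
      by (intro tendsto_Re prod_factor_tendsto)
    then show ?thesis by (rule order_tendstoD) simp
  qed
  have ev2: "eventually (\<lambda>y::real. y > max x 0) at_top" by (rule eventually_gt_at_top)
  obtain Y where Y: "Re (prod_list (map (\<lambda>c. 1 - c / of_real Y) cs)) > 0" "Y > max x 0"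
    using eventually_happens'[OF _ eventually_conj[OF ev1 ev2]] by auto
  have "Re (P Y) = Y ^ length cs * Re (prod_list (map (\<lambda>c. 1 - c / of_real Y) cs))"
    using Y(2) by (simp add: P_def prod_factor_eq)
  then have PY: "Re (P Y) > 0" using Y by simp
  have "Re (P x) > 0"
  proof (rule ccontr)
    assume "\<not> Re (P x) > 0"
    then have "Re (P x) \<le> 0" by simp
    then obtain y where y: "x \<le> y" "y \<le> Y" "Re (P y) = 0"
      using IVT'[of "\<lambda>y. Re (P y)" x 0 Y] PY Y(2) cont by auto
    then have "P y = 0" using PRe[of y] by simp
    with P0 y show False by blast
  qed
  then show ?thesis using PR by (simp add: P_def)
qed

lemma sum_split_nat: fixes N M :: nat shows "(\<Sum>i<N + M. f i) = (\<Sum>i<N. f i) + (\<Sum>j<M. f (N + j))"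
  by (induction M) (simp_all add: add.assoc)

lemma sum_shift_nat: fixes N M :: nat shows "(\<Sum>i\<in>{N..<N + M}. f i) = (\<Sum>j<M. f (N + j))"
  by (induction M) (simp_all add: add.assoc)

lemma prod_list_map_nth: "prod_list (map f xs) = (\<Prod>i<length xs. f (xs ! i))"
proof (induction xs)
  case Nil then show ?case by simp
next
  case (Cons a xs) then show ?case unfolding length_Cons prod.lessThan_Suc_shift by simp
qed

lemma pow_powr_div:
  fixes r :: real
  assumes "0 \<le> r" "1 \<le> n" "1 \<le> \<mu>"
  shows "(r ^ \<mu>) powr (real n / real \<mu>) = r ^ n"
proof (cases "r = 0")
  case True then show ?thesis using assms by (simp add: power_0_left)
next
  case False
  then have r: "r > 0" using assms by simp
  have "(r ^ \<mu>) powr (real n / real \<mu>) = (r powr real \<mu>) powr (real n / real \<mu>)"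
    using r by (simp add: powr_realpow)
  also have "\<dots> = r powr real n" using assms by (simp add: powr_powr)
  also have "\<dots> = r ^ n" using r by (simp add: powr_realpow)
  finally show ?thesis .
qed

lemma inv_pow_deriv:
  fixes w c :: complex
  assumes "w \<noteq> c"
  shows "((\<lambda>w. inverse ((w - c) ^ k)) has_field_derivative (- of_nat k * inverse ((w - c) ^ Suc k))) (at w)"
proof -
  have d: "((\<lambda>w. (w - c) ^ k) has_field_derivative (of_nat k * (w - c) ^ (k - 1))) (at w)"
    by (auto intro!: derivative_eq_intros)
  have nz: "(w - c) ^ k \<noteq> 0" using assms by simp
  have D1: "((\<lambda>w. inverse ((w - c) ^ k)) has_field_derivative
      - (of_nat k * (w - c) ^ (k - 1) * inverse (((w - c) ^ k) ^ Suc (Suc 0)))) (at w)"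
    by (rule DERIV_inverse_fun[OF d nz])
  have EQ: "- (of_nat k * (w - c) ^ (k - 1) * inverse (((w - c) ^ k) ^ Suc (Suc 0)))
      = - of_nat k * inverse ((w - c) ^ Suc k)"
  proof (cases k)
    case 0 then show ?thesis by simp
  next
    case (Suc m)
    define u where "u = w - c"
    have u: "u \<noteq> 0" using assms by (simp add: u_def)
    have "(u ^ Suc m) ^ Suc (Suc 0) = u ^ (Suc m * Suc (Suc 0))" by (rule power_mult[symmetric])
    also have "\<dots> = u ^ (m + Suc (Suc m))" by simp
    also have "\<dots> = u ^ m * u ^ Suc (Suc m)" by (rule power_add)
    finally have e: "(u ^ Suc m) ^ Suc (Suc 0) = u ^ m * u ^ Suc (Suc m)" .
    have h: "u ^ m * inverse ((u ^ Suc m) ^ Suc (Suc 0)) = inverse (u ^ Suc (Suc m))"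
      unfolding e using u by (simp add: inverse_mult_distrib)
    show ?thesis unfolding Suc u_def[symmetric] by (simp only: diff_Suc_1 mult.assoc mult_minus_left h)
  qed
  show ?thesis using D1 unfolding EQ .
qed

lemma Ln_shift_deriv:
  fixes w c :: complex
  assumes "Re (w - c) > 0"
  shows "((\<lambda>w. Ln (w - c)) has_field_derivative inverse (w - c)) (at w)"
proof -
  have "w - c \<notin> \<real>\<^sub>\<le>\<^sub>0" using assms by (simp add: complex_nonpos_Reals_iff)
  then have "(Ln has_field_derivative inverse (w - c)) (at (w - c))" by (rule has_field_derivative_Ln)
  moreover have "((\<lambda>w. w - c) has_field_derivative 1) (at w)" by (auto intro!: derivative_eq_intros)
  ultimately show ?thesis using DERIV_chain2[where f=Ln and g="\<lambda>w. w - c"] by fastforce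
qed

lemma sign_aux:
  fixes a b c :: real
  assumes "1 \<le> k"
  shows "(-1::real) ^ k * (c * (-1) ^ (k - 1) * (b - a)) = c * (a - b)"
proof -
  obtain m where k: "k = Suc m" using assms by (cases k) auto
  have h: "(-1::real) ^ m * (-1) ^ m = 1" by (simp add: power_mult_distrib[symmetric])
  have "(-1::real) ^ k * (c * (-1) ^ (k - 1) * (b - a)) = - (((-1) ^ m * (-1) ^ m) * (c * (b - a)))"
    unfolding k by (simp add: algebra_simps)
  also have "\<dots> = c * (a - b)" unfolding h by (simp add: algebra_simps)
  finally show ?thesis .
qed

lemma coef_aux:
  fixes X Y :: complex
  assumes "1 \<le> k"
  shows "complex_of_real (fact (k - 1) * (-1) ^ (k - 1)) * (- of_nat k * X - - of_nat k * Y)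
       = complex_of_real (fact k * (-1) ^ k) * (X - Y)"
proof -
  obtain m where k: "k = Suc m" using assms by (cases k) auto
  have "fact k = (of_nat k :: real) * fact m" unfolding k by (simp add: fact_Suc)
  then show ?thesis unfolding k by (simp add: algebra_simps)
qed

theorem corollary1:
  fixes K :: real and z p :: "complex list" and nr \<mu> :: nat and \<delta> :: real
  assumes K_pos: "K > 0"
    and mn: "length z \<le> length p"
    and real_num: "\<forall>i. coeff (root_poly z) i \<in> \<real>"
    and real_den: "\<forall>i. coeff (root_poly p) i \<in> \<real>"
    and nr_le: "nr \<le> length p"
    and real_poles: "\<forall>i<nr. Im (p ! i) = 0"
    and nonreal_poles: "\<forall>i. nr \<le> i \<and> i < length p \<longrightarrow> Im (p ! i) \<noteq> 0"
    and mu_pos: "\<mu> \<ge> 1"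
    and delta_p: "\<forall>i<length p. Re (p ! i) + \<delta> > 0"
    and delta_z: "\<forall>j<length z. Re (z ! j) + \<delta> > 0"
    and wmaj: "weakly_majorizes (wvec nr p z \<mu> \<delta>) (vvec nr p z \<mu> \<delta>)"
    and ineq: "\<forall>k\<in>{1..<\<mu>}.
       (\<Sum>i<length p. (wvec nr p z \<mu> \<delta> ! i) powr (real k / real \<mu>))
       + (\<Sum>i<length p. (vvec nr p z \<mu> \<delta> ! i) powr (real k / real \<mu>)
                         * cos (Arg (p ! i + of_real \<delta>) * real k))
       \<ge> (\<Sum>i\<in>{length p..<length p + length z}.
             (vvec nr p z \<mu> \<delta> ! i) powr (real k / real \<mu>)
             * cos (Arg (z ! (i - length p) + of_real \<delta>) * real k))"
  shows "log_compl_mono (ratfun K z p) p"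
proof -
  define N where "N = length p"
  define M where "M = length z"
  define w where "w = wvec nr p z \<mu> \<delta>"
  define v where "v = vvec nr p z \<mu> \<delta>"
  define A where "A i = p ! i + complex_of_real \<delta>" for i
  define B where "B j = z ! j + complex_of_real \<delta>" for j
  have MN: "M \<le> N" using mn by (simp add: M_def N_def)
  have nrN: "nr \<le> N" using nr_le by (simp add: N_def)
  have lw: "length w = N + M" by (simp add: w_def wvec_def N_def M_def)
  have lv: "length v = N + M" by (simp add: v_def vvec_def N_def M_def)
  have wnth: "w ! i = (if i < nr then Re (A i ^ \<mu>) else 0)" if "i < N + M" for i
    using that by (simp add: w_def wvec_def N_def M_def A_def)
  have vnth: "v ! i = (if i < nr then 0 else if i < N then cmod (A i) ^ \<mu> else cmod (B (i - N)) ^ \<mu>)"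
    if "i < N + M" for i
    using that by (simp add: v_def vvec_def N_def M_def A_def B_def)
  have Apos: "Re (A i) > 0" if "i < N" for i using delta_p that by (simp add: A_def N_def)
  have Bpos: "Re (B j) > 0" if "j < M" for j using delta_z that by (simp add: B_def M_def)
  have Areal: "A i = complex_of_real (Re (A i))" if "i < nr" for i
  proof -
    have "Im (A i) = 0" using real_poles that by (simp add: A_def)
    then show ?thesis by (simp add: complex_eq_iff)
  qed
  have w0: "\<forall>a\<in>set w. 0 \<le> a"
  proof
    fix a assume "a \<in> set w"
    then obtain i where i: "i < N + M" "a = w ! i" using lw by (auto simp: in_set_conv_nth)
    show "0 \<le> a"
    proof (cases "i < nr")
      case True
      then have "Re (A i ^ \<mu>) = Re (A i) ^ \<mu>" using Areal[OF True]
        by (metis Re_complex_of_real of_real_power)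
      then show ?thesis using i True Apos[of i] nrN by (simp add: wnth)
    next
      case False then show ?thesis using i by (simp add: wnth)
    qed
  qed
  have v0: "\<forall>a\<in>set v. 0 \<le> a"
  proof
    fix a assume "a \<in> set v"
    then obtain i where i: "i < N + M" "a = v ! i" using lv by (auto simp: in_set_conv_nth)
    then show "0 \<le> a" by (simp add: vnth)
  qed
  have TA: "Re (A i ^ n) = w ! i powr (real n / real \<mu>) + v ! i powr (real n / real \<mu>) * cos (Arg (A i) * real n)"
    if "i < N" "1 \<le> n" for i n
  proof (cases "i < nr")
    case True
    have "Re (A i ^ n) = Re (A i) ^ n" using Areal[OF True]
      by (metis Re_complex_of_real of_real_power)
    moreover have "Re (A i ^ \<mu>) = Re (A i) ^ \<mu>" using Areal[OF True]
      by (metis Re_complex_of_real of_real_power)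
    ultimately show ?thesis using True that Apos[of i] mu_pos
      by (simp add: wnth vnth pow_powr_div less_imp_le)
  next
    case False
    then show ?thesis using that mu_pos
      by (simp add: wnth vnth pow_powr_div Re_pow_Arg)
  qed
  have TB: "Re (B j ^ n) = v ! (N + j) powr (real n / real \<mu>) * cos (Arg (B j) * real n)"
    if "j < M" "1 \<le> n" for j n
    using that mu_pos nrN by (simp add: vnth pow_powr_div Re_pow_Arg)
  have PS: "(\<Sum>j<M. Re (B j ^ n)) \<le> (\<Sum>i<N. Re (A i ^ n))" for n
  proof -
    consider "n = 0" | "1 \<le> n" "n < \<mu>" | "\<mu> \<le> n" "1 \<le> n" using mu_pos by linarith
    then show ?thesis
    proof cases
      case 1 then show ?thesis using MN by simp
    next
      case 2
      define q where "q = real n / real \<mu>"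
      have "n \<in> {1..<\<mu>}" using 2 by simp
      then have I: "(\<Sum>i<N. w ! i powr q) + (\<Sum>i<N. v ! i powr q * cos (Arg (A i) * real n))
          \<ge> (\<Sum>i\<in>{N..<N + M}. v ! i powr q * cos (Arg (B (i - N)) * real n))"
        using ineq unfolding w_def v_def N_def M_def A_def B_def q_def by blast
      have "(\<Sum>i<N. Re (A i ^ n)) = (\<Sum>i<N. w ! i powr q) + (\<Sum>i<N. v ! i powr q * cos (Arg (A i) * real n))"
        using TA 2 by (simp add: sum.distrib q_def)
      moreover have "(\<Sum>i\<in>{N..<N + M}. v ! i powr q * cos (Arg (B (i - N)) * real n)) = (\<Sum>j<M. Re (B j ^ n))"
        using TB 2 by (simp add: sum_shift_nat q_def)
      ultimately show ?thesis using I by linarith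
    next
      case 3
      define q where "q = real n / real \<mu>"
      have q1: "1 \<le> q" using 3 mu_pos by (simp add: q_def)
      have K: "sum_list (map (\<lambda>a. a powr q) v) \<le> sum_list (map (\<lambda>a. a powr q) w)"
        by (rule karamata_powr[OF _ w0 v0 q1]) (use wmaj in \<open>simp add: w_def v_def\<close>)
      have Kw: "sum_list (map (\<lambda>a. a powr q) w) = (\<Sum>i<N. w ! i powr q)"
      proof -
        have "sum_list (map (\<lambda>a. a powr q) w) = (\<Sum>i<N + M. w ! i powr q)"
          using sum_list_map_nth[of "\<lambda>a. a powr q" w] lw by simp
        also have "\<dots> = (\<Sum>i<N. w ! i powr q) + (\<Sum>j<M. w ! (N + j) powr q)" by (rule sum_split_nat)
        also have "(\<Sum>j<M. w ! (N + j) powr q) = 0" using nrN by (simp add: wnth)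
        finally show ?thesis by simp
      qed
      have Kv: "sum_list (map (\<lambda>a. a powr q) v) = (\<Sum>i<N. v ! i powr q) + (\<Sum>j<M. v ! (N + j) powr q)"
      proof -
        have "sum_list (map (\<lambda>a. a powr q) v) = (\<Sum>i<N + M. v ! i powr q)"
          using sum_list_map_nth[of "\<lambda>a. a powr q" v] lv by simp
        also have "\<dots> = (\<Sum>i<N. v ! i powr q) + (\<Sum>j<M. v ! (N + j) powr q)" by (rule sum_split_nat)
        finally show ?thesis .
      qed
      have LA: "(\<Sum>i<N. w ! i powr q - v ! i powr q) \<le> (\<Sum>i<N. Re (A i ^ n))"
      proof (intro sum_mono)
        fix i assume "i \<in> {..<N}"
        then have i: "i < N" by simp
        have "- (v ! i powr q) \<le> v ! i powr q * cos (Arg (A i) * real n)"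
        proof -
          have "v ! i powr q * (-1) \<le> v ! i powr q * cos (Arg (A i) * real n)"
            by (intro mult_left_mono) auto
          then show ?thesis by simp
        qed
        then show "w ! i powr q - v ! i powr q \<le> Re (A i ^ n)"
          using TA[OF i 3(2)] by (simp add: q_def)
      qed
      have LB: "(\<Sum>j<M. Re (B j ^ n)) \<le> (\<Sum>j<M. v ! (N + j) powr q)"
      proof (intro sum_mono)
        fix j assume "j \<in> {..<M}"
        then have j: "j < M" by simp
        have "v ! (N + j) powr q * cos (Arg (B j) * real n) \<le> v ! (N + j) powr q * 1"
          by (intro mult_left_mono) auto
        then show "Re (B j ^ n) \<le> v ! (N + j) powr q"
          using TB[OF j 3(2)] by (simp add: q_def)
      qed
      show ?thesis using K Kw Kv LA LB by (simp add: sum_subtractf)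
    qed
  qed
  define U where "U = {x::real. \<forall>q\<in>set p. Re q < x}"
  have BND: "(\<forall>i<N. cmod (A i) < x + \<delta>) \<and> (\<forall>j<M. cmod (B j) < x + \<delta>)" if "x \<in> U" for x
  proof (cases "N = 0")
    case True then show ?thesis using MN by simp
  next
    case False
    define t where "t = x + \<delta>"
    have ltA: "Re (A i) < t" if "i < N" for i
    proof -
      have "p ! i \<in> set p" using that by (simp add: N_def)
      then have "Re (p ! i) < x" using \<open>x \<in> U\<close> by (simp add: U_def)
      then show ?thesis by (simp add: A_def t_def)
    qed
    have t0: "0 < t" using ltA[of 0] Apos[of 0] False by simp
    define W where "W = rev (sort w)"
    define V where "V = rev (sort v)"
    have lW: "length W = N + M" and lV: "length V = N + M" by (simp_all add: W_def V_def lw lv)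
    have "1 \<in> {1..length w}" using False lw by simp
    then have "sum_list (take 1 V) \<le> sum_list (take 1 W)"
      using wmaj unfolding weakly_majorizes_def w_def[symmetric] v_def[symmetric] V_def W_def by blast
    moreover have "sum_list (take 1 V) = V ! 0" using lV False
      by (subst sum_list_take_nth) auto
    moreover have "sum_list (take 1 W) = W ! 0" using lW False
      by (subst sum_list_take_nth) auto
    ultimately have VW: "V ! 0 \<le> W ! 0" by simp
    have "W ! 0 \<in> set w" using lW False by (metis W_def add_gr_0 bot_nat_0.not_eq_extremum nth_mem set_rev set_sort)
    then obtain i where i: "i < N + M" "W ! 0 = w ! i" using lw by (auto simp: in_set_conv_nth)
    have Wlt: "W ! 0 < t ^ \<mu>"
    proof (cases "i < nr")
      case True
      have "Re (A i ^ \<mu>) = Re (A i) ^ \<mu>" using Areal[OF True]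
        by (metis Re_complex_of_real of_real_power)
      moreover have "Re (A i) ^ \<mu> < t ^ \<mu>"
        using Apos[of i] ltA[of i] True nrN mu_pos by (intro power_strict_mono) auto
      ultimately show ?thesis using i True by (simp add: wnth)
    next
      case False then show ?thesis using i t0 by (simp add: wnth)
    qed
    have vlt: "v ! k < t ^ \<mu>" if "k < N + M" for k
    proof -
      have "v ! k \<in> set V" using that lv by (simp add: V_def)
      then obtain j where j: "j < N + M" "V ! j = v ! k" using lV by (auto simp: in_set_conv_nth)
      have "V ! j \<le> V ! 0" unfolding V_def by (rule rev_sort_desc) (use j lv in auto)
      then show ?thesis using VW Wlt j by simp
    qed
    have "cmod (A i) < t" if "i < N" for i
    proof (cases "i < nr")
      case True
      then show ?thesis using Areal[OF True] ltA[OF that] Apos[OF that]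
        by (metis norm_of_real abs_of_pos)
    next
      case False
      then have "cmod (A i) ^ \<mu> < t ^ \<mu>" using vlt[of i] that by (simp add: vnth)
      then show ?thesis using t0 by (meson less_imp_le power_less_imp_less_base)
    qed
    moreover have "cmod (B j) < t" if "j < M" for j
    proof -
      have "cmod (B j) ^ \<mu> < t ^ \<mu>" using vlt[of "N + j"] that nrN by (simp add: vnth)
      then show ?thesis using t0 by (meson less_imp_le power_less_imp_less_base)
    qed
    ultimately show ?thesis by (simp add: t_def)
  qed
  have zU: "Re (z ! j) < x" if "x \<in> U" "j < M" for x j
  proof -
    have "Re (B j) \<le> cmod (B j)" by (rule complex_Re_le_cmod)
    moreover have "cmod (B j) < x + \<delta>" using BND[OF that(1)] that(2) by blast
    moreover have "Re (B j) = Re (z ! j) + \<delta>" by (simp add: B_def)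
    ultimately show ?thesis by linarith
  qed
  have MI: "Re (\<Sum>j<M. inverse ((complex_of_real x - z ! j) ^ k))
          \<le> Re (\<Sum>i<N. inverse ((complex_of_real x - p ! i) ^ k))" if "x \<in> U" "1 \<le> k" for x k
  proof -
    define t where "t = x + \<delta>"
    define C where "C n = real ((k + n - 1) choose n) / t ^ (n + k)" for n
    have bA: "cmod (A i) < t" if "i < N" for i using BND[OF \<open>x \<in> U\<close>] that by (simp add: t_def)
    have bB: "cmod (B j) < t" if "j < M" for j using BND[OF \<open>x \<in> U\<close>] that by (simp add: t_def)
    have t0: "0 \<le> t" if "N \<noteq> 0" using bA[of 0] that norm_ge_zero[of "A 0"] by linarith
    have ser: "(\<lambda>n. complex_of_real (C n) * a ^ n) sums inverse ((complex_of_real t - a) ^ k)"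
      if "cmod a < t" for a
    proof -
      have "(\<lambda>n. of_nat ((k + n - 1) choose n) * a ^ n / of_real t ^ (n + k)) sums inverse ((of_real t - a) ^ k)"
        by (rule inv_pow_series[OF that \<open>1 \<le> k\<close>])
      moreover have "of_nat ((k + n - 1) choose n) * a ^ n / of_real t ^ (n + k) = complex_of_real (C n) * a ^ n" for n
        by (simp add: C_def)
      ultimately show ?thesis by simp
    qed
    have eA: "complex_of_real x - p ! i = complex_of_real t - A i" for i by (simp add: t_def A_def)
    have eB: "complex_of_real x - z ! j = complex_of_real t - B j" for j by (simp add: t_def B_def)
    have SA: "(\<lambda>n. Re (\<Sum>i<N. complex_of_real (C n) * A i ^ n)) sums Re (\<Sum>i<N. inverse ((complex_of_real x - p ! i) ^ k))"
      unfolding eA by (intro sums_Re sums_sum ser bA) simp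
    have SB: "(\<lambda>n. Re (\<Sum>j<M. complex_of_real (C n) * B j ^ n)) sums Re (\<Sum>j<M. inverse ((complex_of_real x - z ! j) ^ k))"
      unfolding eB by (intro sums_Re sums_sum ser bB) simp
    have C0: "0 \<le> C n" if "N \<noteq> 0" for n using t0[OF that] by (simp add: C_def)
    show ?thesis
    proof (rule sums_le[OF _ SB SA])
      fix n
      show "Re (\<Sum>j<M. complex_of_real (C n) * B j ^ n) \<le> Re (\<Sum>i<N. complex_of_real (C n) * A i ^ n)"
      proof (cases "N = 0")
        case True then show ?thesis using MN by simp
      next
        case False
        then show ?thesis using PS[of n] C0[OF False]
          by (simp add: sum_distrib_left[symmetric] mult_left_mono)
      qed
    qed
  qed
  have openU: "open U"
  proof -
    have "U = (\<Inter>q\<in>set p. {Re q<..})" by (auto simp: U_def)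
    then show ?thesis by (auto intro!: open_INT)
  qed
  define Pz where "Pz x = prod_list (map (\<lambda>c. complex_of_real x - c) z)" for x
  define Pp where "Pp x = prod_list (map (\<lambda>c. complex_of_real x - c) p)" for x
  have Pzpos: "Pz x \<in> \<real> \<and> Re (Pz x) > 0" if "x \<in> U" for x
  proof -
    have "\<forall>c\<in>set z. Re c < x" using zU[OF that] by (auto simp: in_set_conv_nth M_def)
    then show ?thesis unfolding Pz_def by (intro prod_pos real_num)
  qed
  have Pppos: "Pp x \<in> \<real> \<and> Re (Pp x) > 0" if "x \<in> U" for x
  proof -
    have "\<forall>c\<in>set p. Re c < x" using that by (simp add: U_def)
    then show ?thesis unfolding Pp_def by (intro prod_pos real_den)
  qed
  have Heq: "ratfun K z p (complex_of_real x) = complex_of_real K * Pz x / Pp x" for x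
    by (simp add: ratfun_def Pz_def Pp_def)
  have HRe: "ratfun K z p (complex_of_real x) = complex_of_real (K * Re (Pz x) / Re (Pp x))" if "x \<in> U" for x
  proof -
    have "Pz x = complex_of_real (Re (Pz x))" using Pzpos[OF that] by (simp add: of_real_Re)
    moreover have "Pp x = complex_of_real (Re (Pp x))" using Pppos[OF that] by (simp add: of_real_Re)
    ultimately show ?thesis unfolding Heq by (metis of_real_divide of_real_mult)
  qed
  have part1: "ratfun K z p (complex_of_real x) \<in> \<real> \<and> Re (ratfun K z p (complex_of_real x)) > 0"
    if "x \<in> U" for x
    using HRe[OF that] Pzpos[OF that] Pppos[OF that] K_pos by simp
  define g where "g x = ln (Re (ratfun K z p (complex_of_real x)))" for x
  define F0 where "F0 w = (\<Sum>j<M. Ln (w - z ! j)) - (\<Sum>i<N. Ln (w - p ! i))" for w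
  define Fk where "Fk k w = complex_of_real (fact (k - 1) * (-1) ^ (k - 1)) *
      ((\<Sum>j<M. inverse ((w - z ! j) ^ k)) - (\<Sum>i<N. inverse ((w - p ! i) ^ k)))" for k w
  define G where "G k x = (if k = 0 then ln K + Re (F0 (complex_of_real x)) else Re (Fk k (complex_of_real x)))" for k x
  have pU: "Re (complex_of_real x - p ! i) > 0" if "x \<in> U" "i < N" for x i
  proof -
    have "p ! i \<in> set p" using that by (simp add: N_def)
    then show ?thesis using that by (simp add: U_def)
  qed
  have zU': "Re (complex_of_real x - z ! j) > 0" if "x \<in> U" "j < M" for x j
    using zU[OF that] by simp
  have lnprod: "ln (Re (prod_list (map (\<lambda>c. complex_of_real x - c) cs))) = (\<Sum>j<length cs. Re (Ln (complex_of_real x - cs ! j)))"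
    if "prod_list (map (\<lambda>c. complex_of_real x - c) cs) \<in> \<real>" "Re (prod_list (map (\<lambda>c. complex_of_real x - c) cs)) > 0"
       "\<forall>j<length cs. Re (complex_of_real x - cs ! j) > 0" for x cs
  proof -
    let ?P = "prod_list (map (\<lambda>c. complex_of_real x - c) cs)"
    have nz: "complex_of_real x - cs ! j \<noteq> 0" if "j < length cs" for j
      using that \<open>\<forall>j<length cs. Re (complex_of_real x - cs ! j) > 0\<close> by fastforce
    have "Re ?P = cmod ?P"
    proof -
      have "?P = complex_of_real (Re ?P)" using that(1) by (simp add: of_real_Re)
      then have "cmod ?P = \<bar>Re ?P\<bar>" by (metis norm_of_real)
      then show ?thesis using that(2) by simp
    qed
    also have "cmod ?P = (\<Prod>j<length cs. cmod (complex_of_real x - cs ! j))"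
      by (simp add: prod_list_map_nth prod_norm)
    finally have "ln (Re ?P) = ln (\<Prod>j<length cs. cmod (complex_of_real x - cs ! j))" by simp
    also have "\<dots> = (\<Sum>j<length cs. ln (cmod (complex_of_real x - cs ! j)))"
      by (rule ln_prod) (use nz in auto)
    also have "\<dots> = (\<Sum>j<length cs. Re (Ln (complex_of_real x - cs ! j)))"
      using nz by (intro sum.cong) auto
    finally show ?thesis .
  qed
  have g0: "g x = G 0 x" if "x \<in> U" for x
  proof -
    have "g x = ln (K * Re (Pz x) / Re (Pp x))" by (simp add: g_def HRe[OF that])
    also have "\<dots> = ln K + ln (Re (Pz x)) - ln (Re (Pp x))"
      using K_pos Pzpos[OF that] Pppos[OF that] by (simp add: ln_div ln_mult)
    also have "ln (Re (Pz x)) = (\<Sum>j<M. Re (Ln (complex_of_real x - z ! j)))"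
      unfolding Pz_def M_def by (rule lnprod) (use Pzpos[OF that] zU'[OF that] in \<open>auto simp: Pz_def M_def\<close>)
    also have "ln (Re (Pp x)) = (\<Sum>i<N. Re (Ln (complex_of_real x - p ! i)))"
      unfolding Pp_def N_def by (rule lnprod) (use Pppos[OF that] pU[OF that] in \<open>auto simp: Pp_def N_def\<close>)
    finally show ?thesis by (simp add: G_def F0_def)
  qed
  have DF0: "(F0 has_field_derivative Fk 1 (complex_of_real x)) (at (complex_of_real x))" if "x \<in> U" for x
  proof -
    have "(F0 has_field_derivative
        (\<Sum>j<M. inverse (complex_of_real x - z ! j)) - (\<Sum>i<N. inverse (complex_of_real x - p ! i)))
        (at (complex_of_real x))"
      unfolding F0_def
      by (intro DERIV_diff DERIV_sum Ln_shift_deriv) (use pU[OF that] zU'[OF that] in auto)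
    then show ?thesis by (simp add: Fk_def)
  qed
  have DFk: "(Fk k has_field_derivative Fk (Suc k) (complex_of_real x)) (at (complex_of_real x))"
    if "x \<in> U" "1 \<le> k" for x k
  proof -
    have nzp: "complex_of_real x \<noteq> p ! i" if "i < N" for i using pU[OF \<open>x \<in> U\<close> that] by (metis diff_self less_irrefl zero_complex.simps(1))
    have nzz: "complex_of_real x \<noteq> z ! j" if "j < M" for j using zU'[OF \<open>x \<in> U\<close> that] by (metis diff_self less_irrefl zero_complex.simps(1))
    have "(Fk k has_field_derivative
        complex_of_real (fact (k - 1) * (-1) ^ (k - 1)) *
        ((\<Sum>j<M. - of_nat k * inverse ((complex_of_real x - z ! j) ^ Suc k))
        - (\<Sum>i<N. - of_nat k * inverse ((complex_of_real x - p ! i) ^ Suc k))))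
        (at (complex_of_real x))"
      unfolding Fk_def
      by (intro DERIV_cmult DERIV_diff DERIV_sum inv_pow_deriv) (use nzp nzz in auto)
    then have "(Fk k has_field_derivative
        complex_of_real (fact (k - 1) * (-1) ^ (k - 1)) *
        (- of_nat k * (\<Sum>j<M. inverse ((complex_of_real x - z ! j) ^ Suc k))
        - - of_nat k * (\<Sum>i<N. inverse ((complex_of_real x - p ! i) ^ Suc k))))
        (at (complex_of_real x))"
      by (simp only: sum_distrib_left[symmetric])
    then show ?thesis unfolding coef_aux[OF that(2)] by (simp only: Fk_def diff_Suc_1)
  qed
  have DG: "(G k has_real_derivative G (Suc k) x) (at x)" if "x \<in> U" for k x
  proof (cases "k = 0")
    case True
    have "((\<lambda>x. ln K + Re (F0 (complex_of_real x))) has_real_derivative 0 + Re (Fk 1 (complex_of_real x))) (at x)"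
      by (intro DERIV_add DERIV_const RD DF0 that)
    moreover have "G k = (\<lambda>x. ln K + Re (F0 (complex_of_real x)))" using True by (auto simp: G_def)
    ultimately show ?thesis using True by (simp add: G_def)
  next
    case False
    have "((\<lambda>x. Re (Fk k (complex_of_real x))) has_real_derivative Re (Fk (Suc k) (complex_of_real x))) (at x)"
      using DFk[OF that] False by (intro RD) simp
    moreover have "G k = (\<lambda>x. Re (Fk k (complex_of_real x)))" using False by (auto simp: G_def)
    ultimately show ?thesis by (simp add: G_def)
  qed
  have GG: "\<forall>x\<in>U. (deriv ^^ k) g x = G k x" for k
  proof (induction k)
    case 0 then show ?case using g0 by simp
  next
    case (Suc k)
    show ?case
    proof
      fix x assume x: "x \<in> U"
      have "((deriv ^^ k) g has_real_derivative G (Suc k) x) (at x)"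
        by (rule has_field_derivative_transform_within_open[OF DG[OF x] openU x]) (use Suc in auto)
      then show "(deriv ^^ Suc k) g x = G (Suc k) x" by (simp add: DERIV_imp_deriv)
    qed
  qed
  have part2: "0 \<le> (-1) ^ k * (deriv ^^ k) g s" if "s \<in> U" "1 \<le> k" for s k
  proof -
    define SA where "SA = (\<Sum>i<N. inverse ((complex_of_real s - p ! i) ^ k))"
    define SB where "SB = (\<Sum>j<M. inverse ((complex_of_real s - z ! j) ^ k))"
    have "(deriv ^^ k) g s = G k s" using GG that(1) by blast
    also have "\<dots> = Re (Fk k (complex_of_real s))" using that(2) by (simp add: G_def)
    also have "\<dots> = fact (k - 1) * (-1) ^ (k - 1) * (Re SB - Re SA)"
      unfolding Fk_def SA_def[symmetric] SB_def[symmetric] by simp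
    finally have "(-1) ^ k * (deriv ^^ k) g s = (-1) ^ k * (fact (k - 1) * (-1) ^ (k - 1) * (Re SB - Re SA))"
      by simp
    also have "\<dots> = fact (k - 1) * (Re SA - Re SB)" by (rule sign_aux[OF that(2)])
    also have "\<dots> \<ge> 0" using MI[OF that] unfolding SA_def SB_def by simp
    finally show ?thesis .
  qed
  have gdef: "(\<lambda>x. ln (Re (ratfun K z p (complex_of_real x)))) = g" by (rule ext) (simp add: g_def)
  show ?thesis
    unfolding log_compl_mono_def gdef
  proof (intro conjI allI impI)
    fix s :: real assume "\<forall>q\<in>set p. Re q < s"
    then have "s \<in> U" by (simp add: U_def)
    then show "ratfun K z p (complex_of_real s) \<in> \<real>" "0 < Re (ratfun K z p (complex_of_real s))"
      using part1 by blast+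
  next
    fix k :: nat and s :: real assume "1 \<le> k" "\<forall>q\<in>set p. Re q < s"
    then show "0 \<le> (-1) ^ k * (deriv ^^ k) g s" using part2[of s k] by (simp add: U_def)
  qed
qed

end
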